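(* Let $-1\le a<1$ and $\mathfrak g=\mathfrak r_{3,a}$ (basis $\{e_1,e_2,e_3\}$, nonzero brackets $[e_1,e_2]=e_2$, $[e_1,e_3]=ae_3$), and let $\langle\cdot,\cdot\rangle_0$ be the inner product for which $\{e_1,e_2,e_3\}$ is orthonormal. An inner product $\langle\cdot,\cdot\rangle$ on $\mathfrak g$ is a solvsoliton if and only if $[\langle\cdot,\cdot\rangle]=[\langle\cdot,\cdot\rangle_0]$.
   Context: An inner product on a solvable Lie algebra $\mathfrak g$ is a solvsoliton if its Ricci operator satisfies $\mathrm{Ric}=cI+D$ for some $c\in\mathbb R$ and $D\in\mathrm{Der}(\mathfrak g)$ (Ricci operator of the metric Lie algebra defined via the Levi-Civita connection $2\langle\nabla_XY,Z\rangle=\langle[Z,X],Y\rangle+\langle X,[Z,Y]\rangle+\langle[X,Y],Z\rangle$, $R(X,Y)=[\nabla_X,\nabla_Y]-\nabla_{[X,Y]}$, $\mathrm{Ric}(X)=\sum_iR(X,e_i)e_i$ for an orthonormal basis). Two inner products are isometric up to scaling if $\langle\cdot,\cdot\rangle_1=k\langle f\cdot,f\cdot\rangle_2$ for some $k>0$ and Lie algebra automorphism $f$ of $\mathfrak g$; $[\langle\cdot,\cdot\rangle]$ denotes the equivalence class. *)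

theory Defs
  imports "HOL-Analysis.Analysis"
begin

text \<open>The Lie algebra r_{3,a} realised on real^3 with standard basis e1 = axis 1 1,
  e2 = axis 2 1, e3 = axis 3 1; nonzero brackets [e1,e2] = e2, [e1,e3] = a e3.\<close>
definition r3_bracket :: "real \<Rightarrow> real^3 \<Rightarrow> real^3 \<Rightarrow> real^3" where
  "r3_bracket a x y = (\<chi> i. if i = 2 then x$1 * y$2 - x$2 * y$1
                          else if i = 3 then a * (x$1 * y$3 - x$3 * y$1) else 0)"

definition is_inner_product :: "(real^3 \<Rightarrow> real^3 \<Rightarrow> real) \<Rightarrow> bool" where
  "is_inner_product B \<longleftrightarrow> bilinear B \<and> (\<forall>x y. B x y = B y x) \<and> (\<forall>x. x \<noteq> 0 \<longrightarrow> B x x > 0)"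

definition std_inner :: "real^3 \<Rightarrow> real^3 \<Rightarrow> real" where
  "std_inner x y = x \<bullet> y"

text \<open>Levi-Civita connection (Koszul formula for left-invariant metrics).\<close>
definition LC_nabla :: "(real^3 \<Rightarrow> real^3 \<Rightarrow> real^3) \<Rightarrow> (real^3 \<Rightarrow> real^3 \<Rightarrow> real)
     \<Rightarrow> real^3 \<Rightarrow> real^3 \<Rightarrow> real^3" where
  "LC_nabla br B X Y = (THE W. \<forall>Z. 2 * B W Z = B (br Z X) Y + B X (br Z Y) + B (br X Y) Z)"

definition curv :: "(real^3 \<Rightarrow> real^3 \<Rightarrow> real^3) \<Rightarrow> (real^3 \<Rightarrow> real^3 \<Rightarrow> real)
     \<Rightarrow> real^3 \<Rightarrow> real^3 \<Rightarrow> real^3 \<Rightarrow> real^3" where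
  "curv br B X Y Z = LC_nabla br B X (LC_nabla br B Y Z) - LC_nabla br B Y (LC_nabla br B X Z)
                     - LC_nabla br B (br X Y) Z"

definition orthonormal_frame :: "(real^3 \<Rightarrow> real^3 \<Rightarrow> real) \<Rightarrow> (3 \<Rightarrow> real^3) \<Rightarrow> bool" where
  "orthonormal_frame B e \<longleftrightarrow> (\<forall>i j. B (e i) (e j) = (if i = j then 1 else 0))"

text \<open>Ricci operator, computed in an orthonormal basis (the result does not depend on the choice).\<close>
definition Ricci :: "(real^3 \<Rightarrow> real^3 \<Rightarrow> real^3) \<Rightarrow> (real^3 \<Rightarrow> real^3 \<Rightarrow> real)
     \<Rightarrow> real^3 \<Rightarrow> real^3" where
  "Ricci br B X = (let e = (SOME e. orthonormal_frame B e) in (\<Sum>i\<in>UNIV. curv br B X (e i) (e i)))"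

definition is_derivation :: "(real^3 \<Rightarrow> real^3 \<Rightarrow> real^3) \<Rightarrow> (real^3 \<Rightarrow> real^3) \<Rightarrow> bool" where
  "is_derivation br D \<longleftrightarrow> linear D \<and> (\<forall>x y. D (br x y) = br (D x) y + br x (D y))"

definition is_automorphism :: "(real^3 \<Rightarrow> real^3 \<Rightarrow> real^3) \<Rightarrow> (real^3 \<Rightarrow> real^3) \<Rightarrow> bool" where
  "is_automorphism br f \<longleftrightarrow> linear f \<and> bij f \<and> (\<forall>x y. f (br x y) = br (f x) (f y))"

definition is_solvsoliton :: "(real^3 \<Rightarrow> real^3 \<Rightarrow> real^3) \<Rightarrow> (real^3 \<Rightarrow> real^3 \<Rightarrow> real) \<Rightarrow> bool" where
  "is_solvsoliton br B \<longleftrightarrow> (\<exists>c D. is_derivation br D \<and> (\<forall>X. Ricci br B X = c *\<^sub>R X + D X))"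

definition isometric_up_to_scaling :: "(real^3 \<Rightarrow> real^3 \<Rightarrow> real^3) \<Rightarrow> (real^3 \<Rightarrow> real^3 \<Rightarrow> real)
     \<Rightarrow> (real^3 \<Rightarrow> real^3 \<Rightarrow> real) \<Rightarrow> bool" where
  "isometric_up_to_scaling br B1 B2 \<longleftrightarrow>
     (\<exists>k f. k > 0 \<and> is_automorphism br f \<and> (\<forall>x y. B1 x y = k * B2 (f x) (f y)))"

end

theory Submission
  imports Defs
begin

definition brb :: "real \<Rightarrow> real \<Rightarrow> real^3 \<Rightarrow> real^3 \<Rightarrow> real^3" where
  "brb a b x y = (\<chi> i. if i = 2 then (x$1*y$2 - x$2*y$1) + b*(x$1*y$3 - x$3*y$1)
                   else if i = 3 then a*(x$1*y$3 - x$3*y$1) else 0)"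

definition Nb :: "real \<Rightarrow> real \<Rightarrow> real^3 \<Rightarrow> real^3 \<Rightarrow> real^3" where
  "Nb a b X Y = (\<chi> k. ((brb a b (axis k 1) X) \<bullet> Y + X \<bullet> (brb a b (axis k 1) Y) + (brb a b X Y)$k)/2)"

definition Cb where
  "Cb a b X Y Z = Nb a b X (Nb a b Y Z) - Nb a b Y (Nb a b X Z) - Nb a b (brb a b X Y) Z"

definition Rb where
  "Rb a b X = (\<Sum>i\<in>UNIV. Cb a b X (axis i 1) (axis i 1))"

lemmas vs = vec_eq_iff forall_3 sum_3 inner_vec_def axis_def

lemma brb0: "brb a 0 = r3_bracket a"
  by (intro ext) (simp add: brb_def r3_bracket_def vec_eq_iff)

lemma Nb_koszul: "2 * (Nb a b X Y \<bullet> Z) = (brb a b Z X) \<bullet> Y + X \<bullet> (brb a b Z Y) + (brb a b X Y) \<bullet> Z"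
  by (simp add: Nb_def brb_def vs) algebra

lemma Nb_lin2: "linear (Nb a b X)"
  apply (rule linearI)
   apply (simp add: Nb_def brb_def vs field_simps)
  apply (simp add: Nb_def brb_def vs field_simps)
  done

lemma Nb_lin1: "linear (\<lambda>X. Nb a b X Y)"
  apply (rule linearI)
   apply (simp add: Nb_def brb_def vs field_simps)
  apply (simp add: Nb_def brb_def vs field_simps)
  done

lemma brb_lin2: "linear (brb a b X)"
  by (rule linearI) (simp_all add: brb_def vs algebra_simps)

lemma brb_lin1: "linear (\<lambda>X. brb a b X Y)"
  by (rule linearI) (simp_all add: brb_def vs algebra_simps)

lemma Cb_bil: "bilinear (Cb a b X)"
proof -
  have l1: "linear (\<lambda>Y. Cb a b X Y Z)" for Z
    unfolding Cb_def
    by (intro linear_compose_sub linear_compose[OF Nb_lin1 Nb_lin2[of _ _ X], unfolded o_def]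
        linear_compose[OF brb_lin2 Nb_lin1, unfolded o_def] Nb_lin1 Nb_lin2 )
  have l2: "linear (\<lambda>Z. Cb a b X Y Z)" for Y
    unfolding Cb_def
    by (intro linear_compose_sub linear_compose[OF Nb_lin2 Nb_lin2, unfolded o_def] Nb_lin2)
  show ?thesis unfolding bilinear_def using l1 l2 by blast
qed

lemma Rb_e2: "Rb a b (axis 2 1) $ 3 = - b"
  by (simp add: Rb_def Cb_def Nb_def brb_def vs)

definition D0 :: "real \<Rightarrow> real^3 \<Rightarrow> real^3" where
  "D0 a Y = (\<chi> i. if i = 2 then (a^2-a)*Y$2 else if i = 3 then (1-a)*Y$3 else 0)"

lemma Rb0: "Rb a 0 Y = (-(1+a^2)) *\<^sub>R Y + D0 a Y"
  by (simp add: Rb_def Cb_def Nb_def brb_def D0_def vs) (auto simp: algebra_simps power2_eq_square)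

lemma std_ip: "is_inner_product std_inner"
  unfolding is_inner_product_def std_inner_def bilinear_def
  by (auto intro!: linearI simp: inner_add_left inner_add_right inner_commute)

lemma LC_eq:
  assumes B: "is_inner_product B"
    and W: "\<forall>Z. 2 * B W Z = B (br Z X) Y + B X (br Z Y) + B (br X Y) Z"
  shows "LC_nabla br B X Y = W"
  unfolding LC_nabla_def
proof (rule the_equality)
  show "\<forall>Z. 2 * B W Z = B (br Z X) Y + B X (br Z Y) + B (br X Y) Z" by (rule W)
  fix W' assume W': "\<forall>Z. 2 * B W' Z = B (br Z X) Y + B X (br Z Y) + B (br X Y) Z"
  have bil: "bilinear B" using B unfolding is_inner_product_def by blast
  have "B (W' - W) (W' - W) = 0"
    using W[rule_format, of "W' - W"] W'[rule_format, of "W' - W"]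
    by (simp add: bilinear_lsub[OF bil])
  moreover have "\<forall>x. x \<noteq> 0 \<longrightarrow> 0 < B x x" using B unfolding is_inner_product_def by blast
  ultimately show "W' = W" by (metis less_irrefl right_minus_eq)
qed

lemma bil_expand:
  fixes T :: "real^3 \<Rightarrow> real^3 \<Rightarrow> 'b::real_vector"
  assumes T: "bilinear T"
  shows "T x y = (\<Sum>j\<in>UNIV. \<Sum>l\<in>UNIV. (x$j * y$l) *\<^sub>R T (axis j 1) (axis l 1))"
proof -
  have ex: "(\<Sum>j\<in>UNIV. z$j *\<^sub>R axis j 1) = z" for z :: "real^3"
    using basis_expansion[of z] by (simp add: scalar_mult_eq_scaleR)
  have "T x y = T (\<Sum>j\<in>UNIV. x$j *\<^sub>R axis j 1) (\<Sum>l\<in>UNIV. y$l *\<^sub>R axis l 1)"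
    by (simp only: ex)
  also have "\<dots> = (\<Sum>(j,l)\<in>UNIV\<times>UNIV. T (x$j *\<^sub>R axis j 1) (y$l *\<^sub>R axis l 1))"
    by (rule bilinear_sum[OF T])
  also have "\<dots> = (\<Sum>j\<in>UNIV. \<Sum>l\<in>UNIV. T (x$j *\<^sub>R axis j 1) (y$l *\<^sub>R axis l 1))"
    by (simp add: sum.cartesian_product)
  also have "\<dots> = (\<Sum>j\<in>UNIV. \<Sum>l\<in>UNIV. (x$j * y$l) *\<^sub>R T (axis j 1) (axis l 1))"
    by (simp add: bilinear_lmul[OF T] bilinear_rmul[OF T] mult.commute)
  finally show ?thesis .
qed

lemma frame_indep:
  fixes T :: "real^3 \<Rightarrow> real^3 \<Rightarrow> real^3"
  assumes T: "bilinear T" and e: "orthonormal_frame std_inner e"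
  shows "(\<Sum>i\<in>UNIV. T (e i) (e i)) = (\<Sum>i\<in>UNIV. T (axis i 1) (axis i 1))"
proof -
  define U :: "real^3^3" where "U = (\<chi> i j. e i $ j)"
  have "U ** transpose U = mat 1"
    using e by (simp add: U_def matrix_matrix_mult_def transpose_def mat_def vec_eq_iff
        orthonormal_frame_def std_inner_def inner_vec_def)
  hence UU: "transpose U ** U = mat 1" by (simp add: matrix_left_right_inverse)
  have orth: "(\<Sum>i\<in>UNIV. e i $ j * e i $ l) = (if j = l then 1 else 0)" for j l
  proof -
    have "(transpose U ** U) $ j $ l = mat 1 $ j $ l" using UU by simp
    thus ?thesis by (simp add: U_def matrix_matrix_mult_def transpose_def mat_def)
  qed
  let ?f = "\<lambda>i j l. (e i$j * e i$l) *\<^sub>R T (axis j 1) (axis l 1)"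
  have "(\<Sum>i\<in>UNIV. T (e i) (e i)) = (\<Sum>i\<in>UNIV. \<Sum>j\<in>UNIV. \<Sum>l\<in>UNIV. ?f i j l)"
    by (rule sum.cong[OF refl], rule bil_expand[OF T])
  also have "\<dots> = (\<Sum>j\<in>UNIV. \<Sum>i\<in>UNIV. \<Sum>l\<in>UNIV. ?f i j l)"
    by (rule sum.swap)
  also have "\<dots> = (\<Sum>j\<in>UNIV. \<Sum>l\<in>UNIV. \<Sum>i\<in>UNIV. ?f i j l)"
    by (rule sum.cong[OF refl], rule sum.swap)
  also have "\<dots> = (\<Sum>j\<in>UNIV. \<Sum>l\<in>UNIV. (\<Sum>i\<in>UNIV. e i$j * e i$l) *\<^sub>R T (axis j 1) (axis l 1))"
    by (simp add: scaleR_sum_left)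
  also have "\<dots> = (\<Sum>j\<in>UNIV. T (axis j 1) (axis j 1))"
  proof -
    have h: "(if P then 1 else 0) *\<^sub>R v = (if P then v else 0)" for P and v :: "real^3" by simp
    show ?thesis by (simp add: orth h)
  qed
  finally show ?thesis .
qed

lemma LC_std: "LC_nabla (brb a b) std_inner X Y = Nb a b X Y"
  by (rule LC_eq[OF std_ip]) (simp add: std_inner_def Nb_koszul)

lemma transfer:
  fixes B :: "real^3 \<Rightarrow> real^3 \<Rightarrow> real" and br :: "real^3 \<Rightarrow> real^3 \<Rightarrow> real^3"
  assumes B: "is_inner_product B" and m: "m > 0"
    and BQ: "\<And>x y. B x y = m * (Q x \<bullet> Q y)" and Qg: "\<And>y. Q (g y) = y"
    and Qbr: "\<And>x y. Q (br x y) = brb a b (Q x) (Q y)"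
    and linQ: "linear Q" and ling: "linear g"
  shows "Ricci br B X = (1/m) *\<^sub>R g (Rb a b (Q X))"
proof -
  have LC: "LC_nabla br B X Y = g (Nb a b (Q X) (Q Y))" for X Y
  proof (rule LC_eq[OF B], intro allI)
    fix Z
    have "2 * B (g (Nb a b (Q X) (Q Y))) Z = m * (2 * (Nb a b (Q X) (Q Y) \<bullet> Q Z))"
      by (simp add: BQ Qg)
    also have "\<dots> = m * ((brb a b (Q Z) (Q X)) \<bullet> Q Y + Q X \<bullet> (brb a b (Q Z) (Q Y))
                          + (brb a b (Q X) (Q Y)) \<bullet> Q Z)"
      by (simp only: Nb_koszul)
    also have "\<dots> = B (br Z X) Y + B X (br Z Y) + B (br X Y) Z"
      by (simp add: BQ Qbr algebra_simps)
    finally show "2 * B (g (Nb a b (Q X) (Q Y))) Z = B (br Z X) Y + B X (br Z Y) + B (br X Y) Z" .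
  qed
  have curv: "curv br B X Y Z = g (Cb a b (Q X) (Q Y) (Q Z))" for X Y Z
    by (simp add: curv_def LC Qg Qbr Cb_def linear_diff[OF ling])
  define e0 where "e0 i = (1/sqrt m) *\<^sub>R g (axis i 1)" for i
  have Qe0: "Q (e0 i) = (1/sqrt m) *\<^sub>R axis i 1" for i
    by (simp add: e0_def linear_scale[OF linQ] Qg)
  have "orthonormal_frame B e0"
    unfolding orthonormal_frame_def using m
    by (simp add: BQ Qe0 inner_axis_axis)
  hence ex: "\<exists>e. orthonormal_frame B e" by blast
  define e where "e = (SOME e. orthonormal_frame B e)"
  have he: "orthonormal_frame B e" unfolding e_def by (rule someI_ex[OF ex])
  define e' where "e' i = sqrt m *\<^sub>R Q (e i)" for i
  have eq: "e' i \<bullet> e' j = B (e i) (e j)" for i j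
    using m by (simp add: e'_def BQ mult.assoc[symmetric])
  have he': "orthonormal_frame std_inner e'"
    using he unfolding orthonormal_frame_def by (simp add: std_inner_def eq)
  have sc: "Cb a b (Q X) (e' i) (e' i) = m *\<^sub>R Cb a b (Q X) (Q (e i)) (Q (e i))" for i
    using m by (simp add: e'_def bilinear_lmul[OF Cb_bil] bilinear_rmul[OF Cb_bil])
  have "Ricci br B X = (\<Sum>i\<in>UNIV. curv br B X (e i) (e i))"
    unfolding Ricci_def Let_def e_def ..
  also have "\<dots> = g (\<Sum>i\<in>UNIV. Cb a b (Q X) (Q (e i)) (Q (e i)))"
    by (simp add: curv linear_sum[OF ling])
  also have "(\<Sum>i\<in>UNIV. Cb a b (Q X) (Q (e i)) (Q (e i)))
      = (1/m) *\<^sub>R (\<Sum>i\<in>UNIV. Cb a b (Q X) (e' i) (e' i))"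
    using m by (simp add: sc scaleR_sum_right)
  also have "(\<Sum>i\<in>UNIV. Cb a b (Q X) (e' i) (e' i)) = Rb a b (Q X)"
    unfolding Rb_def by (rule frame_indep[OF Cb_bil he'])
  finally show ?thesis by (simp add: linear_scale[OF ling])
qed
lemma alg: fixes x1 x2 x3 y1 y2 y3 :: real
 assumes "\<alpha>*G22 + \<beta>*G23 = -G12" "\<alpha>*G23 + \<beta>*G33 = -G13" "m = G11 + \<alpha>*G12 + \<beta>*G13" "m*\<gamma>^2 = G22" "m*\<delta>^2 = G33" "m*t*\<gamma>*\<delta> = G23" "s^2 = 1 - t^2"
shows "x1*y1*G11 + x1*y2*G12 + x1*y3*G13 + x2*y1*G12 + x2*y2*G22 + x2*y3*G23 + x3*y1*G13 + x3*y2*G23 + x3*y3*G33 = m*(x1*y1 + (\<gamma>*(x2-\<alpha>*x1) + t*\<delta>*(x3-\<beta>*x1))*(\<gamma>*(y2-\<alpha>*y1) + t*\<delta>*(y3-\<beta>*y1)) + (s*\<delta>*(x3-\<beta>*x1))*(s*\<delta>*(y3-\<beta>*y1)))"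
  using assms by algebra

lemma lin_inv: "linear Q \<Longrightarrow> (\<And>y. Q (g y) = y) \<Longrightarrow> (\<And>x. g (Q x) = x) \<Longrightarrow> linear g"
proof -
  assume l: "linear Q" and qg: "\<And>y. Q (g y) = y" and gq: "\<And>x. g (Q x) = x"
  show "linear g"
  proof (rule linearI)
    fix x y
    have "g (x + y) = g (Q (g x) + Q (g y))" by (simp only: qg)
    also have "\<dots> = g (Q (g x + g y))" by (simp only: linear_add[OF l])
    also have "\<dots> = g x + g y" by (rule gq)
    finally show "g (x + y) = g x + g y" .
  next
    fix c x
    have "g (c *\<^sub>R x) = g (c *\<^sub>R Q (g x))" by (simp only: qg)
    also have "\<dots> = g (Q (c *\<^sub>R g x))" by (simp only: linear_scale[OF l])
    also have "\<dots> = c *\<^sub>R g x" by (rule gq)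
    finally show "g (c *\<^sub>R x) = c *\<^sub>R g x" .
  qed
qed

lemma D0_lin: "linear (D0 a)"
  by (rule linearI) (simp_all add: D0_def vs algebra_simps)

lemma D0_der: "D0 a (r3_bracket a u v) = r3_bracket a (D0 a u) v + r3_bracket a u (D0 a v)"
  by (simp add: D0_def r3_bracket_def vs algebra_simps power2_eq_square)

lemma br_scale1: "r3_bracket a (c *\<^sub>R x) y = c *\<^sub>R r3_bracket a x y"
  by (simp add: r3_bracket_def vs algebra_simps)
lemma br_scale2: "r3_bracket a x (c *\<^sub>R y) = c *\<^sub>R r3_bracket a x y"
  by (simp add: r3_bracket_def vs algebra_simps)

lemma Bexp:
  fixes B :: "real^3 \<Rightarrow> real^3 \<Rightarrow> real"
  assumes "bilinear B"
  shows "B x y = x$1*y$1*B (axis 1 1) (axis 1 1) + x$1*y$2*B (axis 1 1) (axis 2 1) + x$1*y$3*B (axis 1 1) (axis 3 1)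
     + x$2*y$1*B (axis 2 1) (axis 1 1) + x$2*y$2*B (axis 2 1) (axis 2 1) + x$2*y$3*B (axis 2 1) (axis 3 1)
     + x$3*y$1*B (axis 3 1) (axis 1 1) + x$3*y$2*B (axis 3 1) (axis 2 1) + x$3*y$3*B (axis 3 1) (axis 3 1)"
  by (subst bil_expand[OF assms]) (simp add: sum_3 algebra_simps)


lemma dir1:
  fixes a :: real and B :: "real^3 \<Rightarrow> real^3 \<Rightarrow> real"
  assumes "-1 \<le> a" and "a < 1"
    and "is_inner_product B"
    and sol: "is_solvsoliton (r3_bracket a) B"
  shows "isometric_up_to_scaling (r3_bracket a) B std_inner"
proof -
  have a1: "a \<noteq> 1" using assms(2) by simp
  have Bip: "is_inner_product B" by (rule assms(3))
  have bil: "bilinear B" and symB: "\<And>x y. B x y = B y x" and pos: "\<And>x. x \<noteq> 0 \<Longrightarrow> B x x > 0"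
    using Bip unfolding is_inner_product_def by auto
  let ?br = "r3_bracket a"
  from sol obtain c D where der: "is_derivation ?br D" and ric: "\<And>X. Ricci ?br B X = c *\<^sub>R X + D X"
    unfolding is_solvsoliton_def by blast
  define G where "G i j = B (axis i 1) (axis j 1)" for i j
  have Bx: "B x y = x$1*y$1*G 1 1 + x$1*y$2*G 1 2 + x$1*y$3*G 1 3
     + x$2*y$1*G 1 2 + x$2*y$2*G 2 2 + x$2*y$3*G 2 3
     + x$3*y$1*G 1 3 + x$3*y$2*G 2 3 + x$3*y$3*G 3 3" for x y
    using Bexp[OF bil, of x y] symB unfolding G_def by metis
  have G22: "G 2 2 > 0" unfolding G_def by (rule pos) (simp add: vec_eq_iff axis_def)
  have G33: "G 3 3 > 0" unfolding G_def by (rule pos) (simp add: vec_eq_iff axis_def)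
  define v :: "real^3" where "v = (\<chi> i. if i = 2 then G 3 3 else if i = 3 then - G 2 3 else 0)"
  have "v $ 2 \<noteq> 0" using G33 by (simp add: v_def)
  hence "v \<noteq> 0" by auto
  hence "B v v > 0" by (rule pos)
  hence "G 3 3 * (G 2 2 * G 3 3 - (G 2 3)^2) > 0"
    by (simp add: Bx v_def algebra_simps power2_eq_square)
  hence Del: "G 2 2 * G 3 3 - (G 2 3)^2 > 0" using G33 by (simp add: zero_less_mult_iff)
  define \<Delta> where "\<Delta> = G 2 2 * G 3 3 - (G 2 3)^2"
  define \<alpha> where "\<alpha> = (- G 1 2 * G 3 3 + G 1 3 * G 2 3) / \<Delta>"
  define \<beta> where "\<beta> = (- G 1 3 * G 2 2 + G 1 2 * G 2 3) / \<Delta>"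
  have Dne: "\<Delta> \<noteq> 0" using Del by (simp add: \<Delta>_def)
  have R1: "\<alpha>*G 2 2 + \<beta>*G 2 3 = -G 1 2"
    using Dne unfolding \<alpha>_def \<beta>_def by (simp add: field_simps) (simp add: \<Delta>_def algebra_simps power2_eq_square)
  have R2: "\<alpha>*G 2 3 + \<beta>*G 3 3 = -G 1 3"
    using Dne unfolding \<alpha>_def \<beta>_def by (simp add: field_simps) (simp add: \<Delta>_def algebra_simps power2_eq_square)
  define m where "m = G 1 1 + \<alpha>*G 1 2 + \<beta>*G 1 3"
  define w :: "real^3" where "w = (\<chi> i. if i = 1 then 1 else if i = 2 then \<alpha> else \<beta>)"
  have "w $ 1 = 1" by (simp add: w_def)
  hence "w \<noteq> 0" by auto
  hence "B w w > 0" by (rule pos)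
  moreover have "B w w = m"
  proof -
    have "B w w = G 1 1 + 2*\<alpha>*G 1 2 + 2*\<beta>*G 1 3 + \<alpha>*(\<alpha>*G 2 2 + \<beta>*G 2 3) + \<beta>*(\<alpha>*G 2 3 + \<beta>*G 3 3)"
      by (simp add: Bx w_def algebra_simps)
    thus ?thesis by (simp add: R1 R2 m_def)
  qed
  ultimately have m: "m > 0" by simp
  define \<gamma> where "\<gamma> = sqrt (G 2 2 / m)"
  define \<delta> where "\<delta> = sqrt (G 3 3 / m)"
  define t where "t = G 2 3 / sqrt (G 2 2 * G 3 3)"
  define s where "s = sqrt (1 - t^2)"
  have gam: "\<gamma> > 0" "m*\<gamma>^2 = G 2 2" using m G22 by (simp_all add: \<gamma>_def)
  have del: "\<delta> > 0" "m*\<delta>^2 = G 3 3" using m G33 by (simp_all add: \<delta>_def)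
  have t2: "t^2 < 1"
  proof -
    have "t^2 = (G 2 3)^2 / (G 2 2 * G 3 3)" using G22 G33 by (simp add: t_def power_divide)
    thus ?thesis using Del G22 G33 by (simp add: divide_less_eq)
  qed
  have s: "s > 0" "s^2 = 1 - t^2" using t2 by (simp_all add: s_def)
  have gd: "m*t*\<gamma>*\<delta> = G 2 3"
  proof -
    have "\<gamma>*\<delta> = sqrt (G 2 2 * G 3 3) / m"
      using m G22 G33 by (simp add: \<gamma>_def \<delta>_def real_sqrt_mult[symmetric] real_sqrt_divide)
    moreover have "sqrt (G 2 2 * G 3 3) > 0" using G22 G33 by simp
    ultimately have "m*(\<gamma>*\<delta>) = sqrt (G 2 2 * G 3 3)" and sp: "sqrt (G 2 2 * G 3 3) \<noteq> 0"
      using m G22 G33 by simp_all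
    hence "m*t*\<gamma>*\<delta> = t * sqrt (G 2 2 * G 3 3)" by (simp add: algebra_simps)
    thus ?thesis using sp by (simp add: t_def)
  qed
  define bb where "bb = (a - 1) * t / s"
  have bbs: "bb * s = (a-1)*t" using s by (simp add: bb_def)
  define Q :: "real^3 \<Rightarrow> real^3" where "Q x = (\<chi> i. if i = 1 then x$1 else if i = 2 then
       \<gamma>*(x$2 - \<alpha>*x$1) + t*\<delta>*(x$3 - \<beta>*x$1) else s*\<delta>*(x$3 - \<beta>*x$1))" for x
  define g :: "real^3 \<Rightarrow> real^3" where "g y = (\<chi> i. if i = 1 then y$1 else if i = 2 then
       \<alpha>*y$1 + (y$2 - t*y$3/s)/\<gamma> else \<beta>*y$1 + y$3/(s*\<delta>))" for y
  have Qg: "Q (g y) = y" for y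
    using gam del s by (simp add: Q_def g_def vs field_simps)
  have gQ: "g (Q x) = x" for x
    using gam del s by (simp add: Q_def g_def vs field_simps)
  have linQ: "linear Q" by (rule linearI) (simp_all add: Q_def vs algebra_simps)
  have ling: "linear g" by (rule lin_inv[OF linQ Qg gQ])
  have BQ: "B x y = m * (Q x \<bullet> Q y)" for x y
  proof -
    have "B x y = m*(x$1*y$1 + (\<gamma>*(x$2-\<alpha>*x$1) + t*\<delta>*(x$3-\<beta>*x$1))*(\<gamma>*(y$2-\<alpha>*y$1) + t*\<delta>*(y$3-\<beta>*y$1))
           + (s*\<delta>*(x$3-\<beta>*x$1))*(s*\<delta>*(y$3-\<beta>*y$1)))"
      by (subst Bx) (rule alg[OF R1 R2 m_def gam(2) del(2) gd s(2)])
    also have "\<dots> = m * (Q x \<bullet> Q y)" by (simp add: Q_def vs algebra_simps)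
    finally show ?thesis .
  qed
  have Qbr: "Q (?br x y) = brb a bb (Q x) (Q y)" for x y
    using s(1) by (simp add: Q_def brb_def r3_bracket_def vs bb_def field_simps)
  have tr: "Ricci ?br B X = (1/m) *\<^sub>R g (Rb a bb (Q X))" for X
    by (rule transfer[OF Bip m BQ Qg Qbr linQ ling])
  have linD: "linear D" and Dbr: "\<And>x y. D (?br x y) = ?br (D x) y + ?br x (D y)"
    using der unfolding is_derivation_def by auto
  have e12: "?br (axis 1 1) (axis 2 1) = axis 2 1" by (simp add: r3_bracket_def vs)
  define r where "r = D (axis 2 1)"
  define p where "p = D (axis 1 1)"
  have E: "r = ?br p (axis 2 1) + ?br (axis 1 1) r"
    unfolding r_def p_def using Dbr[of "axis 1 1" "axis 2 1"] e12 by simp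
  have "r $ 1 = (?br p (axis 2 1) + ?br (axis 1 1) r) $ 1" using E by (rule arg_cong)
  moreover have "(?br p (axis 2 1) + ?br (axis 1 1) r) $ 1 = 0" by (simp add: r3_bracket_def)
  ultimately have r1: "r $ 1 = 0" by simp
  have "r $ 3 = (?br p (axis 2 1) + ?br (axis 1 1) r) $ 3" using E by (rule arg_cong)
  moreover have "(?br p (axis 2 1) + ?br (axis 1 1) r) $ 3 = a * r $ 3"
    by (simp add: r3_bracket_def axis_def)
  ultimately have h: "r $ 3 = a * r $ 3" by simp
  have "(1 - a) * r $ 3 = r $ 3 - a * r $ 3" by (simp add: algebra_simps)
  with h have "(1 - a) * r $ 3 = 0" by linarith
  hence r3: "r $ 3 = 0" using a1 by simp
  have De2: "D (axis 2 1) $ 1 = 0" "D (axis 2 1) $ 3 = 0" using r1 r3 unfolding r_def by auto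
  define X0 where "X0 = (1/\<gamma>) *\<^sub>R (axis 2 1 :: real^3)"
  have gX0: "g (axis 2 1) = X0" using gam by (simp add: g_def X0_def vs)
  have QX0: "Q X0 = axis 2 1" using Qg[of "axis 2 1"] gX0 by simp
  have "(1/m) *\<^sub>R g (Rb a bb (axis 2 1)) = c *\<^sub>R X0 + D X0"
    using tr[of X0] ric[of X0] QX0 by simp
  hence "Q ((1/m) *\<^sub>R g (Rb a bb (axis 2 1))) = Q (c *\<^sub>R X0 + D X0)" by simp
  hence "(1/m) *\<^sub>R Rb a bb (axis 2 1) = Q (c *\<^sub>R X0 + D X0)"
    by (simp add: linear_scale[OF linQ] Qg)
  hence "((1/m) *\<^sub>R Rb a bb (axis 2 1)) $ 3 = Q (c *\<^sub>R X0 + D X0) $ 3" by (rule arg_cong)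
  hence "(1/m) * (Rb a bb (axis 2 1) $ 3) = Q (c *\<^sub>R X0 + D X0) $ 3" by simp
  moreover have "Q (c *\<^sub>R X0 + D X0) $ 3 = 0"
    using De2 by (simp add: Q_def X0_def linear_scale[OF linD] axis_def)
  ultimately have "bb = 0" using m by (simp add: Rb_e2)
  hence t0: "t = 0" using a1 s by (simp add: bb_def)
  hence s1: "s = 1" by (simp add: s_def)
  show "isometric_up_to_scaling ?br B std_inner"
    unfolding isometric_up_to_scaling_def is_automorphism_def
  proof (intro exI conjI allI)
    show "m > 0" by (rule m)
    show "linear Q" by (rule linQ)
    show "bij Q" by (rule o_bij[of g]) (auto simp: gQ Qg)
    show "Q (?br x y) = ?br (Q x) (Q y)" for x y using Qbr[of x y] \<open>bb = 0\<close> brb0 by simp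
    show "B x y = m * std_inner (Q x) (Q y)" for x y by (simp add: BQ std_inner_def)
  qed
qed

lemma dir2:
  fixes a :: real and B :: "real^3 \<Rightarrow> real^3 \<Rightarrow> real"
  assumes "-1 \<le> a" and "a < 1"
    and "is_inner_product B"
    and iso: "isometric_up_to_scaling (r3_bracket a) B std_inner"
  shows "is_solvsoliton (r3_bracket a) B"
proof -
  let ?br = "r3_bracket a"
  have Bip: "is_inner_product B" by (rule assms(3))
  from iso obtain k f where k: "k > 0" and aut: "is_automorphism ?br f"
    and Bk: "\<And>x y. B x y = k * std_inner (f x) (f y)"
    unfolding isometric_up_to_scaling_def by blast
  have linf: "linear f" and bijf: "bij f" and fbr: "\<And>x y. f (?br x y) = ?br (f x) (f y)"
    using aut unfolding is_automorphism_def by auto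
  define g where "g = inv f"
  have fg: "f (g y) = y" for y unfolding g_def by (rule surj_f_inv_f[OF bij_is_surj[OF bijf]])
  have gf: "g (f x) = x" for x unfolding g_def by (rule inv_f_f[OF bij_is_inj[OF bijf]])
  have ling: "linear g" by (rule lin_inv[OF linf fg gf])
  have gbr: "g (?br u v) = ?br (g u) (g v)" for u v
  proof -
    have "g (?br u v) = g (?br (f (g u)) (f (g v)))" by (simp add: fg)
    also have "\<dots> = g (f (?br (g u) (g v)))" by (simp only: fbr)
    also have "\<dots> = ?br (g u) (g v)" by (simp only: gf)
    finally show ?thesis .
  qed
  have tr: "Ricci ?br B X = (1/k) *\<^sub>R g (Rb a 0 (f X))" for X
    by (rule transfer[OF Bip k]) (simp_all add: Bk std_inner_def fg fbr brb0 linf ling)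
  define D where "D X = (1/k) *\<^sub>R g (D0 a (f X))" for X
  have "Ricci ?br B X = (-(1+a^2)/k) *\<^sub>R X + D X" for X
    by (simp add: tr Rb0 D_def linear_add[OF ling] linear_scale[OF ling] gf scaleR_add_right)
  moreover have "is_derivation ?br D"
    unfolding is_derivation_def
  proof (intro conjI allI)
    show "linear D" unfolding D_def
      by (rule linearI) (simp_all add: linear_add[OF linf] linear_add[OF D0_lin] linear_add[OF ling]
          linear_scale[OF linf] linear_scale[OF D0_lin] linear_scale[OF ling] scaleR_add_right)
    show "D (?br x y) = ?br (D x) y + ?br x (D y)" for x y
      by (simp add: D_def fbr D0_der linear_add[OF ling] gbr gf br_scale1 br_scale2 scaleR_add_right)
  qed
  ultimately show "is_solvsoliton ?br B" unfolding is_solvsoliton_def by blast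
qed

theorem proposition4p9:
  fixes a :: real and B :: "real^3 \<Rightarrow> real^3 \<Rightarrow> real"
  assumes "-1 \<le> a" and "a < 1"
    and "is_inner_product B"
  shows "is_solvsoliton (r3_bracket a) B \<longleftrightarrow> isometric_up_to_scaling (r3_bracket a) B std_inner"
  using dir1[OF assms] dir2[OF assms] by blast

thm_deps proposition4p9

end
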